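(* For any $\lambda,\mu\in\mathbb C\setminus\{\lambda_1,\dots,\lambda_N\}$ and any positive integers $k,l$, $$\{\operatorname{tr}L^k(\lambda),\operatorname{tr}L^l(\mu)\}=0$$ identically on the phase space.
   Context: Fix $N\ge1$, distinct nonzero real $\lambda_1,\dots,\lambda_N$. Phase space: $\mathbb C^{3N}\cong\mathbb R^{6N}$ with complex coordinates $\phi_{j\alpha}$ ($j=1,2,3$, $\alpha=1,\dots,N$) and Wirtinger derivatives $\partial/\partial\phi_{j\alpha}$, $\partial/\partial\bar\phi_{j\alpha}$. The Poisson bracket (associated with the symplectic form $\omega=\mathrm{i}\sum_{j,\alpha}d\bar\phi_{j\alpha}\wedge d\phi_{j\alpha}$) is $$\{\xi,\eta\}=-\mathrm{i}\sum_{j=1}^3\sum_{\alpha=1}^N\Big(\frac{\partial\xi}{\partial\phi_{j\alpha}}\frac{\partial\eta}{\partial\bar\phi_{j\alpha}}-\frac{\partial\xi}{\partial\bar\phi_{j\alpha}}\frac{\partial\eta}{\partial\phi_{j\alpha}}\Big).$$ With $F_\alpha=(\phi_{1\alpha},\phi_{2\alpha},\phi_{3\alpha})^T$ and $C=\operatorname{diag}(1,-1,0)$, $$L(\lambda)=C+\sum_{\alpha=1}^N\frac{1}{\lambda-\lambda_\alpha}F_\alpha F_\alpha^*,$$ a $3\times3$ matrix whose entries are functions on phase space. *)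

theory Defs
  imports "HOL-Analysis.Analysis"
begin

text \<open>Phase space C^{3N}: a point p assigns to each alpha (index type 'n, N = CARD('n))
  and each j (index type 3, j = 0,1,2 standing for 1,2,3) the coordinate phi_{j alpha} = p alpha j.\<close>

type_synonym 'n phase = "'n \<Rightarrow> 3 \<Rightarrow> complex"

definition shift_coord :: "'n phase \<Rightarrow> 3 \<Rightarrow> 'n \<Rightarrow> complex \<Rightarrow> 'n phase" where
  "shift_coord p j a t = p(a := (p a)(j := p a j + t))"

definition pd_re :: "('n phase \<Rightarrow> complex) \<Rightarrow> 3 \<Rightarrow> 'n \<Rightarrow> 'n phase \<Rightarrow> complex" where
  "pd_re f j a p = vector_derivative (\<lambda>s::real. f (shift_coord p j a (of_real s))) (at 0)"

definition pd_im :: "('n phase \<Rightarrow> complex) \<Rightarrow> 3 \<Rightarrow> 'n \<Rightarrow> 'n phase \<Rightarrow> complex" where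
  "pd_im f j a p = vector_derivative (\<lambda>s::real. f (shift_coord p j a (\<i> * of_real s))) (at 0)"

definition wirt :: "('n phase \<Rightarrow> complex) \<Rightarrow> 3 \<Rightarrow> 'n \<Rightarrow> 'n phase \<Rightarrow> complex" where
  "wirt f j a p = (pd_re f j a p - \<i> * pd_im f j a p) / 2"

definition wirt_bar :: "('n phase \<Rightarrow> complex) \<Rightarrow> 3 \<Rightarrow> 'n \<Rightarrow> 'n phase \<Rightarrow> complex" where
  "wirt_bar f j a p = (pd_re f j a p + \<i> * pd_im f j a p) / 2"

definition poisson :: "('n::finite phase \<Rightarrow> complex) \<Rightarrow> ('n phase \<Rightarrow> complex) \<Rightarrow> 'n phase \<Rightarrow> complex" where
  "poisson f g p = - \<i> * (\<Sum>j\<in>(UNIV::3 set). \<Sum>a\<in>(UNIV::'n set).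
      wirt f j a p * wirt_bar g j a p - wirt_bar f j a p * wirt g j a p)"

definition Cmat :: "complex^3^3" where
  "Cmat = (\<chi> i j. if i = j then (if i = 0 then 1 else if i = 1 then -1 else 0) else 0)"

definition Lax :: "('n::finite \<Rightarrow> real) \<Rightarrow> complex \<Rightarrow> 'n phase \<Rightarrow> complex^3^3" where
  "Lax lam mu p = Cmat + (\<chi> i j. \<Sum>a\<in>UNIV. p a i * cnj (p a j) / (mu - of_real (lam a)))"

fun matpow :: "'a::semiring_1^'m^'m \<Rightarrow> nat \<Rightarrow> 'a^'m^'m" where
  "matpow A 0 = mat 1"
| "matpow A (Suc k) = A ** matpow A k"

end

theory Submission
  imports Defs
begin

lemma matpow_add: "matpow (A::'a::comm_semiring_1^'m^'m) (m + n) = matpow A m ** matpow A n"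
  by (induction m) (auto simp: matrix_mul_assoc)

lemma matpow_comm: "matpow (A::'a::comm_semiring_1^'m^'m) m ** matpow A n = matpow A n ** matpow A m"
  by (metis add.commute matpow_add)

lemma matpow_comm1: "A ** matpow (A::'a::comm_semiring_1^'m^'m) n = matpow A n ** A"
  using matpow_comm[of A 1 n] by simp

lemma mat_mul_sum_right:
  fixes A :: "'a::comm_semiring_1^'m^'m"
  shows "A ** sum f S = (\<Sum>x\<in>S. A ** f x)"
  by (induction S rule: infinite_finite_induct) (auto simp: matrix_add_ldistrib)

lemma trace_sum: "trace (sum (f::_\<Rightarrow>'a::comm_semiring_1^'m^'m) S) = (\<Sum>x\<in>S. trace (f x))"
  unfolding trace_def by (simp add: sum.swap[of _ UNIV])

lemma matpow_deriv:
  fixes M :: "real \<Rightarrow> complex^'m^'m"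
  assumes "\<And>i l. ((\<lambda>s. M s $ i $ l) has_vector_derivative M' $ i $ l) (at 0)"
  shows "((\<lambda>s. matpow (M s) k $ i $ l) has_vector_derivative
     (\<Sum>m<k. matpow (M 0) m ** M' ** matpow (M 0) (k - 1 - m)) $ i $ l) (at 0)"
proof (induction k arbitrary: i l)
  case 0
  then show ?case by simp
next
  case (Suc k)
  let ?D = "\<lambda>k. (\<Sum>m<k. matpow (M 0) m ** M' ** matpow (M 0) (k - 1 - m))"
  have h1: "((\<lambda>s. \<Sum>m\<in>UNIV. M s $ i $ m * matpow (M s) k $ m $ l) has_vector_derivative
      (\<Sum>m\<in>UNIV. M 0 $ i $ m * ?D k $ m $ l + M' $ i $ m * matpow (M 0) k $ m $ l)) (at 0)"
    by (intro has_vector_derivative_sum has_vector_derivative_mult assms Suc)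
  have h2: "(\<Sum>m\<in>UNIV. M 0 $ i $ m * ?D k $ m $ l + M' $ i $ m * matpow (M 0) k $ m $ l)
     = (M 0 ** ?D k + M' ** matpow (M 0) k) $ i $ l"
    by (simp add: matrix_matrix_mult_def sum.distrib)
  have h3: "M 0 ** ?D k + M' ** matpow (M 0) k = ?D (Suc k)"
  proof -
    have "?D (Suc k) = matpow (M 0) 0 ** M' ** matpow (M 0) k + (\<Sum>m<k. matpow (M 0) (Suc m) ** M' ** matpow (M 0) (k - 1 - m))"
      unfolding sum.lessThan_Suc_shift by simp
    also have "\<dots> = M' ** matpow (M 0) k + M 0 ** ?D k"
      by (simp add: mat_mul_sum_right matrix_mul_assoc)
    finally show ?thesis by (simp add: add.commute)
  qed
  have fe: "(\<lambda>s. matpow (M s) (Suc k) $ i $ l) = (\<lambda>s. \<Sum>m\<in>UNIV. M s $ i $ m * matpow (M s) k $ m $ l)"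
    by (simp add: matrix_matrix_mult_def)
  show ?case using h1 unfolding fe h2 h3 .
qed

lemma trace_matpow_deriv:
  fixes M :: "real \<Rightarrow> complex^'m^'m"
  assumes "\<And>i l. ((\<lambda>s. M s $ i $ l) has_vector_derivative M' $ i $ l) (at 0)"
  shows "((\<lambda>s. trace (matpow (M s) k)) has_vector_derivative
     of_nat k * trace (matpow (M 0) (k - 1) ** M')) (at 0)"
proof -
  have "((\<lambda>s. \<Sum>i\<in>UNIV. matpow (M s) k $ i $ i) has_vector_derivative
     (\<Sum>i\<in>UNIV. (\<Sum>m<k. matpow (M 0) m ** M' ** matpow (M 0) (k - 1 - m)) $ i $ i)) (at 0)"
    by (intro has_vector_derivative_sum matpow_deriv assms)
  moreover have "(\<Sum>i\<in>UNIV. (\<Sum>m<k. matpow (M 0) m ** M' ** matpow (M 0) (k - 1 - m)) $ i $ i)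
     = trace (\<Sum>m<k. matpow (M 0) m ** M' ** matpow (M 0) (k - 1 - m))"
    by (simp add: trace_def)
  moreover have "\<dots> = (\<Sum>m<k. trace (matpow (M 0) (k - 1) ** M'))"
    unfolding trace_sum
  proof (rule sum.cong[OF refl])
    fix m assume "m \<in> {..<k}"
    then have e: "k - Suc m + m = k - Suc 0" by auto
    have "trace (matpow (M 0) m ** M' ** matpow (M 0) (k - 1 - m))
        = trace (matpow (M 0) (k - 1 - m) ** (matpow (M 0) m ** M'))"
      by (rule trace_mul_sym)
    also have "\<dots> = trace (matpow (M 0) (k - 1) ** M')"
      by (simp add: matrix_mul_assoc matpow_add[symmetric] e)
    finally show "trace (matpow (M 0) m ** M' ** matpow (M 0) (k - 1 - m)) = trace (matpow (M 0) (k - 1) ** M')" .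
  qed
  ultimately show ?thesis by (simp add: trace_def)
qed

lemma poly_deriv:
  "((\<lambda>s::real. (x + e1 * of_real s) * cnj (y + e2 * of_real s) / d) has_vector_derivative
     (x * cnj e2 + e1 * cnj y) / d) (at 0)"
proof -
  have e: "(\<lambda>s::real. (x + e1 * of_real s) * cnj (y + e2 * of_real s) / d)
     = (\<lambda>s::real. (x + e1 * of_real s) * (cnj y + cnj e2 * of_real s) / d)"
    by simp
  have "((\<lambda>s::real. (x + e1 * of_real s) * (cnj y + cnj e2 * of_real s) / d) has_vector_derivative
     ((x + e1 * of_real 0) * (0 + cnj e2 * of_real 1) + (0 + e1 * of_real 1) * (cnj y + cnj e2 * of_real 0)) / d) (at 0)"
    by (intro has_vector_derivative_divide has_vector_derivative_mult has_vector_derivative_add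
        has_vector_derivative_const has_vector_derivative_mult_right has_vector_derivative_of_real DERIV_ident)
  then show ?thesis unfolding e by simp
qed

lemma shift_coord_nth: "shift_coord p j a t b i = (if b = a \<and> i = j then p b i + t else p b i)"
  by (simp add: shift_coord_def)

lemma shift_coord_0: "shift_coord p j a 0 = p"
  by (simp add: shift_coord_def)

lemma lax_deriv:
  fixes lam :: "'n::finite \<Rightarrow> real"
  shows "((\<lambda>s. Lax lam la (shift_coord p j a (u * of_real s)) $ i $ l) has_vector_derivative
   ((if l = j then p a i * cnj u else 0) + (if i = j then u * cnj (p a l) else 0)) / (la - of_real (lam a))) (at 0)"
proof -
  define e1 where "e1 = (if i = j then u else 0)"
  define e2 where "e2 = (if l = j then u else 0)"
  define d where "d = la - of_real (lam a)"
  have fe: "(\<lambda>s. Lax lam la (shift_coord p j a (u * of_real s)) $ i $ l) = (\<lambda>s. Cmat $ i $ l +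
      (\<Sum>b\<in>UNIV. if b = a then (p a i + e1 * of_real s) * cnj (p a l + e2 * of_real s) / d
         else p b i * cnj (p b l) / (la - of_real (lam b))))"
    apply (rule ext)
    apply (simp only: Lax_def vector_add_component vec_lambda_beta)
    apply (rule arg_cong[where f="\<lambda>x. Cmat $ i $ l + x"])
    apply (rule sum.cong[OF refl])
    apply (auto simp: shift_coord_nth e1_def e2_def d_def)
    done
  have "((\<lambda>s. Cmat $ i $ l +
      (\<Sum>b\<in>UNIV. if b = a then (p a i + e1 * of_real s) * cnj (p a l + e2 * of_real s) / d
         else p b i * cnj (p b l) / (la - of_real (lam b)))) has_vector_derivative
      0 + (\<Sum>b\<in>UNIV. if b = a then (p a i * cnj e2 + e1 * cnj (p a l)) / d else 0)) (at 0)"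
    apply (intro has_vector_derivative_add has_vector_derivative_const has_vector_derivative_sum)
    subgoal for b by (cases "b = a") (simp_all add: poly_deriv[of "p a i" e1 "p a l" e2 d, simplified])
    done
  moreover have eqD: "0 + (\<Sum>b\<in>UNIV. if b = a then (p a i * cnj e2 + e1 * cnj (p a l)) / d else 0)
     = ((if l = j then p a i * cnj u else 0) + (if i = j then u * cnj (p a l) else 0)) / (la - of_real (lam a))"
    by (auto simp: e1_def e2_def d_def add_divide_distrib)
  ultimately show ?thesis unfolding fe by (simp only:)
qed

lemma trace_M':
  fixes A :: "complex^3^3"
  shows "trace (A ** (\<chi> i l. ((if l = j then p a i * cnj u else 0) + (if i = j then u * cnj (p a l) else 0)) / d))
   = (cnj u * (\<Sum>m\<in>UNIV. A $ j $ m * p a m) + u * (\<Sum>i\<in>UNIV. A $ i $ j * cnj (p a i))) / d"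
proof -
  have "trace (A ** (\<chi> i l. ((if l = j then p a i * cnj u else 0) + (if i = j then u * cnj (p a l) else 0)) / d))
    = (\<Sum>i\<in>UNIV. \<Sum>m\<in>UNIV. (if i = j then A $ i $ m * p a m * cnj u / d else 0)
          + (if m = j then A $ i $ m * u * cnj (p a i) / d else 0))"
    unfolding trace_def matrix_matrix_mult_def
    by (auto intro!: sum.cong simp: add_divide_distrib distrib_left mult.assoc)
  also have "\<dots> = (\<Sum>m\<in>UNIV. A $ j $ m * p a m * cnj u / d) + (\<Sum>i\<in>UNIV. A $ i $ j * u * cnj (p a i) / d)"
    by (simp add: sum.distrib sum.swap[of _ UNIV UNIV])
  also have "\<dots> = (cnj u * (\<Sum>m\<in>UNIV. A $ j $ m * p a m) + u * (\<Sum>i\<in>UNIV. A $ i $ j * cnj (p a i))) / d"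
    by (simp add: sum_distrib_left sum_divide_distrib add_divide_distrib mult_ac)
  finally show ?thesis .
qed

lemma pd_formula:
  fixes lam :: "'n::finite \<Rightarrow> real" and la :: complex and p :: "'n phase" and k :: nat
  defines "A \<equiv> matpow (Lax lam la p) (k - 1)"
  shows "vector_derivative (\<lambda>s. trace (matpow (Lax lam la (shift_coord p j a (u * of_real s))) k)) (at 0)
    = of_nat k * ((cnj u * (\<Sum>m\<in>UNIV. A $ j $ m * p a m) + u * (\<Sum>i\<in>UNIV. A $ i $ j * cnj (p a i))) / (la - of_real (lam a)))"
proof -
  let ?M = "\<lambda>s. Lax lam la (shift_coord p j a (u * of_real s))"
  let ?M' = "\<chi> i l. ((if l = j then p a i * cnj u else 0) + (if i = j then u * cnj (p a l) else 0)) / (la - of_real (lam a))"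
  have "((\<lambda>s. trace (matpow (?M s) k)) has_vector_derivative of_nat k * trace (matpow (?M 0) (k - 1) ** ?M')) (at 0)"
    by (rule trace_matpow_deriv) (simp add: lax_deriv)
  moreover have "?M 0 = Lax lam la p" by (simp add: shift_coord_0)
  ultimately show ?thesis
    by (simp add: vector_derivative_at trace_M' A_def)
qed

lemma aux_wirt:
  fixes R L d k :: complex
  shows "(k * ((R + L) / d) - \<i> * (k * ((- \<i> * R + \<i> * L) / d))) / 2 = k * L / d"
    and "(k * ((R + L) / d) + \<i> * (k * ((- \<i> * R + \<i> * L) / d))) / 2 = k * R / d"
  by (cases "d = 0"; simp add: field_simps)+

lemma wirt_formula:
  fixes lam :: "'n::finite \<Rightarrow> real" and la :: complex and p :: "'n phase" and k :: nat
  shows "wirt (\<lambda>q. trace (matpow (Lax lam la q) k)) j a p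
    = of_nat k * (\<Sum>i\<in>UNIV. matpow (Lax lam la p) (k - 1) $ i $ j * cnj (p a i)) / (la - of_real (lam a))"
    and "wirt_bar (\<lambda>q. trace (matpow (Lax lam la q) k)) j a p
    = of_nat k * (\<Sum>m\<in>UNIV. matpow (Lax lam la p) (k - 1) $ j $ m * p a m) / (la - of_real (lam a))"
proof -
  let ?A = "matpow (Lax lam la p) (k - 1)"
  let ?R = "\<Sum>m\<in>UNIV. ?A $ j $ m * p a m"
  let ?L = "\<Sum>i\<in>UNIV. ?A $ i $ j * cnj (p a i)"
  let ?d = "la - of_real (lam a)"
  have re: "pd_re (\<lambda>q. trace (matpow (Lax lam la q) k)) j a p = of_nat k * ((?R + ?L) / ?d)"
    unfolding pd_re_def using pd_formula[where lam=lam and la=la and j=j and a=a and u=1 and p=p and k=k] by simp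
  have im: "pd_im (\<lambda>q. trace (matpow (Lax lam la q) k)) j a p = of_nat k * ((- \<i> * ?R + \<i> * ?L) / ?d)"
    unfolding pd_im_def using pd_formula[where lam=lam and la=la and j=j and a=a and u="\<i>" and p=p and k=k] by simp
  show "wirt (\<lambda>q. trace (matpow (Lax lam la q) k)) j a p = of_nat k * ?L / ?d"
    unfolding wirt_def re im by (rule aux_wirt)
  show "wirt_bar (\<lambda>q. trace (matpow (Lax lam la q) k)) j a p = of_nat k * ?R / ?d"
    unfolding wirt_bar_def re im by (rule aux_wirt)
qed

lemma sum_j:
  fixes A B :: "complex^3^3" and F :: "3 \<Rightarrow> complex"
  shows "(\<Sum>j\<in>UNIV. (\<Sum>i\<in>UNIV. A$i$j * cnj (F i)) * (\<Sum>m\<in>UNIV. B$j$m * F m)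
          - (\<Sum>m\<in>UNIV. A$j$m * F m) * (\<Sum>i\<in>UNIV. B$i$j * cnj (F i)))
    = (\<Sum>i\<in>UNIV. \<Sum>m\<in>UNIV. (A ** B - B ** A)$i$m * (F m * cnj (F i)))"
proof -
  have "(\<Sum>i\<in>UNIV. \<Sum>m\<in>UNIV. (A ** B - B ** A)$i$m * (F m * cnj (F i)))
     = (\<Sum>i\<in>UNIV. \<Sum>m\<in>UNIV. \<Sum>j\<in>UNIV. A$i$j * B$j$m * (F m * cnj (F i)) - B$i$j * A$j$m * (F m * cnj (F i)))"
    by (simp add: matrix_matrix_mult_def sum_subtractf sum_distrib_right left_diff_distrib)
  also have "\<dots> = (\<Sum>j\<in>UNIV. \<Sum>i\<in>UNIV. \<Sum>m\<in>UNIV. A$i$j * B$j$m * (F m * cnj (F i)) - B$i$j * A$j$m * (F m * cnj (F i)))"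
    by (subst sum.swap, subst (2) sum.swap, rule refl)
  also have "\<dots> = (\<Sum>j\<in>UNIV. (\<Sum>i\<in>UNIV. A$i$j * cnj (F i)) * (\<Sum>m\<in>UNIV. B$j$m * F m)
          - (\<Sum>m\<in>UNIV. A$j$m * F m) * (\<Sum>i\<in>UNIV. B$i$j * cnj (F i)))"
  proof (rule sum.cong[OF refl])
    fix j :: 3
    have e1: "(\<Sum>i\<in>UNIV. A$i$j * cnj (F i)) * (\<Sum>m\<in>UNIV. B$j$m * F m)
        = (\<Sum>i\<in>UNIV. \<Sum>m\<in>UNIV. A$i$j * B$j$m * (F m * cnj (F i)))"
      unfolding sum_product by (simp add: mult_ac)
    have e2: "(\<Sum>m\<in>UNIV. A$j$m * F m) * (\<Sum>i\<in>UNIV. B$i$j * cnj (F i))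
        = (\<Sum>i\<in>UNIV. \<Sum>m\<in>UNIV. B$i$j * A$j$m * (F m * cnj (F i)))"
      unfolding sum_product by (subst sum.swap) (simp add: mult_ac)
    show "(\<Sum>i\<in>UNIV. \<Sum>m\<in>UNIV. A$i$j * B$j$m * (F m * cnj (F i)) - B$i$j * A$j$m * (F m * cnj (F i)))
      = (\<Sum>i\<in>UNIV. A$i$j * cnj (F i)) * (\<Sum>m\<in>UNIV. B$j$m * F m)
          - (\<Sum>m\<in>UNIV. A$j$m * F m) * (\<Sum>i\<in>UNIV. B$i$j * cnj (F i))"
      unfolding e1 e2 by (simp add: sum_subtractf)
  qed
  finally show ?thesis by simp
qed

lemma trace_KG:
  fixes K :: "complex^3^3" and F :: "'n::finite \<Rightarrow> 3 \<Rightarrow> complex" and w :: "'n \<Rightarrow> complex"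
  shows "trace (K ** (\<chi> m i. \<Sum>a\<in>UNIV. F a m * cnj (F a i) * w a))
    = (\<Sum>a\<in>UNIV. w a * (\<Sum>i\<in>UNIV. \<Sum>m\<in>UNIV. K$i$m * (F a m * cnj (F a i))))"
proof -
  have "trace (K ** (\<chi> m i. \<Sum>a\<in>UNIV. F a m * cnj (F a i) * w a))
     = (\<Sum>i\<in>UNIV. \<Sum>m\<in>UNIV. \<Sum>a\<in>UNIV. w a * (K$i$m * (F a m * cnj (F a i))))"
    by (simp add: trace_def matrix_matrix_mult_def sum_distrib_left mult_ac)
  also have "\<dots> = (\<Sum>i\<in>UNIV. \<Sum>a\<in>UNIV. \<Sum>m\<in>UNIV. w a * (K$i$m * (F a m * cnj (F a i))))"
    by (rule sum.cong[OF refl], rule sum.swap)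
  also have "\<dots> = (\<Sum>a\<in>UNIV. \<Sum>i\<in>UNIV. \<Sum>m\<in>UNIV. w a * (K$i$m * (F a m * cnj (F a i))))"
    by (rule sum.swap)
  also have "\<dots> = (\<Sum>a\<in>UNIV. w a * (\<Sum>i\<in>UNIV. \<Sum>m\<in>UNIV. K$i$m * (F a m * cnj (F a i))))"
    by (simp add: sum_distrib_left)
  finally show ?thesis .
qed

lemma mat_sub_ldistrib: "(A::'a::comm_ring_1^'m^'m) ** (B - C) = A ** B - A ** C"
  by (vector matrix_matrix_mult_def sum_subtractf algebra_simps)

lemma mat_sub_rdistrib: "((A::'a::comm_ring_1^'m^'m) - B) ** C = A ** C - B ** C"
  by (vector matrix_matrix_mult_def sum_subtractf algebra_simps)

lemma aux_term:
  fixes k l x y z t c e :: complex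
  shows "(k * x / c) * (l * y / e) - (k * z / c) * (l * t / e) = k * l * (1 / (c * e) * (x * y - z * t))"
  by (cases "c = 0"; cases "e = 0"; simp add: field_simps)

theorem lemma3:
  fixes lam :: "'n::finite \<Rightarrow> real" and la mu :: complex and k l :: nat
  assumes "inj lam"
    and "\<forall>a. lam a \<noteq> 0"
    and "\<forall>a. la \<noteq> of_real (lam a)"
    and "\<forall>a. mu \<noteq> of_real (lam a)"
    and "k \<ge> 1" and "l \<ge> 1"
  shows "\<forall>p. poisson (\<lambda>q. trace (matpow (Lax lam la q) k))
                     (\<lambda>q. trace (matpow (Lax lam mu q) l)) p = 0"
proof
  fix p :: "'n phase"
  define Ll where "Ll = Lax lam la p"
  define Lm where "Lm = Lax lam mu p"
  define A where "A = matpow Ll (k - 1)"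
  define B where "B = matpow Lm (l - 1)"
  define K where "K = A ** B - B ** A"
  define c where "c a = la - of_real (lam a)" for a
  define e where "e a = mu - of_real (lam a)" for a
  define w where "w a = 1 / (c a * e a)" for a
  define G :: "complex^3^3" where "G = (\<chi> m i. \<Sum>a\<in>UNIV. p a m * cnj (p a i) * w a)"
  have c0: "c a \<noteq> 0" for a using assms(3) by (auto simp: c_def)
  have e0: "e a \<noteq> 0" for a using assms(4) by (auto simp: e_def)
  let ?LA = "\<lambda>j a. \<Sum>i\<in>UNIV. A $ i $ j * cnj (p a i)"
  let ?RA = "\<lambda>j a. \<Sum>m\<in>UNIV. A $ j $ m * p a m"
  let ?LB = "\<lambda>j a. \<Sum>i\<in>UNIV. B $ i $ j * cnj (p a i)"
  let ?RB = "\<lambda>j a. \<Sum>m\<in>UNIV. B $ j $ m * p a m"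
  have "poisson (\<lambda>q. trace (matpow (Lax lam la q) k)) (\<lambda>q. trace (matpow (Lax lam mu q) l)) p
    = - \<i> * (\<Sum>j\<in>UNIV. \<Sum>a\<in>UNIV. (of_nat k * ?LA j a / c a) * (of_nat l * ?RB j a / e a)
        - (of_nat k * ?RA j a / c a) * (of_nat l * ?LB j a / e a))"
    unfolding poisson_def wirt_formula A_def B_def Ll_def Lm_def c_def e_def ..
  also have "\<dots> = - \<i> * of_nat k * of_nat l * (\<Sum>a\<in>UNIV. w a * (\<Sum>j\<in>UNIV. ?LA j a * ?RB j a - ?RA j a * ?LB j a))"
  proof -
    have "(\<Sum>j\<in>UNIV. \<Sum>a\<in>UNIV. (of_nat k * ?LA j a / c a) * (of_nat l * ?RB j a / e a)
        - (of_nat k * ?RA j a / c a) * (of_nat l * ?LB j a / e a))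
      = (\<Sum>j\<in>UNIV. \<Sum>a\<in>UNIV. of_nat k * of_nat l * (w a * (?LA j a * ?RB j a - ?RA j a * ?LB j a)))"
      unfolding aux_term w_def ..
    also have "\<dots> = (\<Sum>a\<in>UNIV. \<Sum>j\<in>UNIV. of_nat k * of_nat l * (w a * (?LA j a * ?RB j a - ?RA j a * ?LB j a)))"
      by (rule sum.swap)
    also have "\<dots> = of_nat k * of_nat l * (\<Sum>a\<in>UNIV. w a * (\<Sum>j\<in>UNIV. ?LA j a * ?RB j a - ?RA j a * ?LB j a))"
      by (simp only: sum_distrib_left)
    finally show ?thesis by simp
  qed
  also have "\<dots> = - \<i> * of_nat k * of_nat l * trace (K ** G)"
    unfolding G_def trace_KG K_def sum_j ..
  also have "trace (K ** G) = 0"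
  proof (cases "la = mu")
    case True
    then have "K = 0" by (simp add: K_def A_def B_def Ll_def Lm_def matpow_comm)
    then show ?thesis by (simp add: trace_def matrix_matrix_mult_def)
  next
    case False
    have ent: "(Ll - Lm) $ m $ i = (mu - la) * G $ m $ i" for m i
    proof -
      have "(Ll - Lm) $ m $ i = (\<Sum>a\<in>UNIV. p a m * cnj (p a i) / c a - p a m * cnj (p a i) / e a)"
        by (simp add: Ll_def Lm_def Lax_def c_def e_def sum_subtractf)
      also have "\<dots> = (\<Sum>a\<in>UNIV. (mu - la) * (p a m * cnj (p a i) * w a))"
      proof (rule sum.cong[OF refl])
        fix a
        have h: "mu - la = e a - c a" by (simp add: c_def e_def)
        show "p a m * cnj (p a i) / c a - p a m * cnj (p a i) / e a = (mu - la) * (p a m * cnj (p a i) * w a)"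
          unfolding h w_def using c0[of a] e0[of a] by (simp add: field_simps)
      qed
      also have "\<dots> = (mu - la) * G $ m $ i"
        by (simp add: G_def sum_distrib_left)
      finally show ?thesis .
    qed
    have ent2: "Ll $ m $ i - Lm $ m $ i = (mu - la) * G $ m $ i" for m i using ent[of m i] by simp
    have "trace (K ** (Ll - Lm)) = (mu - la) * trace (K ** G)"
      by (simp add: ent2 trace_def matrix_matrix_mult_def sum_distrib_left mult_ac)
    moreover have "trace (K ** (Ll - Lm)) = 0"
    proof -
      have AL: "A ** Ll = Ll ** A" unfolding A_def by (rule matpow_comm1[symmetric])
      have BL: "B ** Lm = Lm ** B" unfolding B_def by (rule matpow_comm1[symmetric])
      have t1: "trace (B ** A ** Ll) = trace (A ** B ** Ll)"
        by (metis AL matrix_mul_assoc trace_mul_sym)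
      have t2: "trace (A ** B ** Lm) = trace (B ** A ** Lm)"
        by (metis BL matrix_mul_assoc trace_mul_sym)
      show ?thesis
        by (simp add: K_def mat_sub_ldistrib mat_sub_rdistrib trace_sub t1 t2)
    qed
    ultimately show ?thesis using False by simp
  qed
  finally show "poisson (\<lambda>q. trace (matpow (Lax lam la q) k))
                     (\<lambda>q. trace (matpow (Lax lam mu q) l)) p = 0" by simp
qed

end
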